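(* For all non-negative integers $n$, $p$ and $m$, $$\sum_{k=0}^n\frac{1}{2^{2k}}\binom{2(k+p)}{k+p}\binom{k+p}{k}H_{n-k}(m)\left(O_{k+p}-O_p\right)=\frac12\sum_{k=0}^n\frac{1}{2^{2k}}\binom{2(k+p)}{k+p}\binom{k+p}{k}H_{n-k}(m+1).$$ In particular, $$\sum_{k=0}^n\frac{1}{2^{2k}}\binom{2(k+p)}{k+p}\binom{k+p}{k}H_{n-k}=\frac{1}{2^{2n}}\,\frac{p+1}{2p+1}\binom{2(n+p+1)}{n+p+1}\binom{n+p+1}{n}\left(O_{n+p+1}-O_{p+1}\right).$$
   Context: For integers $m\ge 1$, $n\ge 0$, the multiple harmonic-like numbers are $H_n(m)=\sum_{1\le k_1+k_2+\cdots+k_m\le n}\frac{1}{k_1k_2\cdots k_m}$ (sum over positive integers $k_1,\dots,k_m$), with $H_n(0)=1$ for $n\ge 0$ and $H_0(m)=0$ for $m\ge1$. $H_n=\sum_{k=1}^n\frac1k$. The odd harmonic numbers are $O_n=\sum_{k=1}^n\frac{1}{2k-1}$, $O_0=0$. *)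

theory Defs
  imports "HOL-Analysis.Analysis"
begin

definition mhn :: "nat \<Rightarrow> nat \<Rightarrow> real" where
  "mhn n m = (if m = 0 then 1 else
     (\<Sum>k\<in>{k \<in> {0..<m} \<rightarrow>\<^sub>E {1..n}. 1 \<le> (\<Sum>i<m. k i) \<and> (\<Sum>i<m. k i) \<le> n}.
        1 / (\<Prod>i<m. real (k i))))"

definition harmonic :: "nat \<Rightarrow> real" where
  "harmonic n = (\<Sum>k=1..n. 1 / real k)"

definition oddharm :: "nat \<Rightarrow> real" where
  "oddharm n = (\<Sum>k=1..n. 1 / (2 * real k - 1))"

end

theory Submission imports Defs begin


definition T :: "nat \<Rightarrow> nat \<Rightarrow> (nat \<Rightarrow> nat) set" where
  "T n m = {k \<in> {0..<m} \<rightarrow>\<^sub>E {1..n}. (\<Sum>i<m. k i) \<le> n}"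

definition G :: "nat \<Rightarrow> nat \<Rightarrow> real" where
  "G n m = (\<Sum>k\<in>T n m. 1 / (\<Prod>i<m. real (k i)))"

lemma finite_T: "finite (T n m)"
  unfolding T_def by (rule finite_subset[of _ "{0..<m} \<rightarrow>\<^sub>E {1..n}"]) (auto intro: finite_PiE)

lemma mhn_G: "mhn n m = G n m"
proof (cases "m = 0")
  case True
  then show ?thesis by (simp add: mhn_def G_def T_def)
next
  case False
  have "{k \<in> {0..<m} \<rightarrow>\<^sub>E {1..n}. 1 \<le> (\<Sum>i<m. k i) \<and> (\<Sum>i<m. k i) \<le> n} = T n m"
  proof -
    have "1 \<le> (\<Sum>i<m. k i)" if k: "k \<in> {0..<m} \<rightarrow>\<^sub>E {1..n}" for k
    proof -
      have "k 0 \<le> (\<Sum>i<m. k i)"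
        by (rule member_le_sum) (use False in auto)
      moreover have "1 \<le> k 0" using k False by (auto simp: PiE_def Pi_def)
      ultimately show ?thesis by simp
    qed
    then show ?thesis unfolding T_def by blast
  qed
  then show ?thesis using False by (simp add: mhn_def G_def)
qed

lemma T_Suc: "T n (Suc m) = (\<lambda>(j,k). k(m:=j)) ` (SIGMA j:{1..n}. T (n-j) m)"
proof (intro equalityI subsetI)
  fix k' assume k': "k' \<in> T n (Suc m)"
  define j where "j = k' m"
  define k where "k = k'(m:=undefined)"
  have s: "(\<Sum>i<Suc m. k' i) = j + (\<Sum>i<m. k i)"
    by (simp add: j_def k_def)
  have km: "k i = k' i" if "i < m" for i using that by (simp add: k_def)
  have "(\<Sum>i<m. k i) \<le> n - j" using k' s unfolding T_def by (simp del: sum.lessThan_Suc) arith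
  moreover have "j \<in> {1..n}" using k' by (auto simp: T_def j_def PiE_def Pi_def)
  moreover have "k \<in> {0..<m} \<rightarrow>\<^sub>E {1..n-j}"
  proof -
    have "k i \<le> (\<Sum>i<m. k i)" if "i < m" for i
      by (rule member_le_sum) (use that in auto)
    then show ?thesis using k' \<open>(\<Sum>i<m. k i) \<le> n - j\<close> km
      by (auto simp: T_def PiE_def Pi_def extensional_def k_def) (meson le_trans lessI less_trans)
  qed
  ultimately have "(j,k) \<in> (SIGMA j:{1..n}. T (n-j) m)" by (auto simp: T_def)
  moreover have "k' = k(m:=j)" by (auto simp: k_def j_def)
  ultimately show "k' \<in> (\<lambda>(j,k). k(m:=j)) ` (SIGMA j:{1..n}. T (n-j) m)" by force
next
  fix x assume "x \<in> (\<lambda>(j,k). k(m:=j)) ` (SIGMA j:{1..n}. T (n-j) m)"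
  then obtain j k where x: "x = k(m:=j)" and j: "j \<in> {1..n}" and k: "k \<in> T (n-j) m" by auto
  have s: "(\<Sum>i<Suc m. x i) = j + (\<Sum>i<m. k i)"
    by (simp add: x)
  show "x \<in> T n (Suc m)" using j k s
    by (auto simp: T_def x PiE_def Pi_def extensional_def) (metis less_SucE diff_le_self le_trans)
qed

lemma G_Suc: "G n (Suc m) = (\<Sum>j=1..n. G (n-j) m / real j)"
proof -
  have inj: "inj_on (\<lambda>(j,k). k(m:=j)) (SIGMA j:{1..n}. T (n-j) m)"
  proof (rule inj_onI, clarsimp)
    fix a b a' b' assume "b \<in> T (n-a) m" "b' \<in> T (n-a') m" "b(m:=a) = b'(m:=a')"
    then show "a = a' \<and> b = b'"
      by (auto simp: T_def PiE_def extensional_def fun_eq_iff) (metis fun_upd_same, metis fun_upd_other lessThan_iff less_irrefl)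
  qed
  have "G n (Suc m) = (\<Sum>(j,k)\<in>(SIGMA j:{1..n}. T (n-j) m). 1 / (\<Prod>i<Suc m. real ((k(m:=j)) i)))"
    unfolding G_def T_Suc by (subst sum.reindex[OF inj]) (simp add: case_prod_unfold)
  also have "\<dots> = (\<Sum>(j,k)\<in>(SIGMA j:{1..n}. T (n-j) m). 1 / (\<Prod>i<m. real (k i)) / real j)"
    by (intro sum.cong refl) (auto simp: case_prod_unfold)
  also have "\<dots> = (\<Sum>j=1..n. G (n-j) m / real j)"
    by (subst sum.Sigma[symmetric]) (auto simp: finite_T G_def sum_divide_distrib)
  finally show ?thesis .
qed


definition c :: "nat \<Rightarrow> nat \<Rightarrow> real" where
  "c p k = 1 / 2 ^ (2*k) * real ((2*(k+p)) choose (k+p)) * real ((k+p) choose k)"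

lemma central_rec: "(q+1) * ((2*q+2) choose (q+1)) = 2*(2*q+1) * ((2*q) choose q)"
proof -
  define X where "X = (2*q+2) choose (q+1)"
  define Y where "Y = (2*q+1) choose q"
  define Z where "Z = (2*q) choose q"
  have a: "(q+1) * X = (2*q+2) * Y"
    unfolding X_def Y_def using Suc_times_binomial[of q "2*q+1"] by (simp only: Suc_eq_plus1 add.assoc one_add_one)
  have b: "(q+1) * Y = (2*q+1) * Z"
  proof -
    have "(q+1) * ((2*q+1) choose (q+1)) = (2*q+1) * ((2*q) choose q)"
      using Suc_times_binomial[of q "2*q"] by (simp only: Suc_eq_plus1)
    moreover have "(2*q+1) choose (q+1) = (2*q+1) choose q"
      using binomial_symmetric[of "q+1" "2*q+1"] by simp
    ultimately show ?thesis unfolding Y_def Z_def by simp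
  qed
  have "(q+1) * ((q+1) * X) = (q+1) * (2*(2*q+1) * Z)"
  proof -
    have "(q+1) * ((q+1) * X) = (2*q+2) * ((q+1) * Y)" using a by (simp only: mult_ac)
    also have "\<dots> = (q+1) * (2*(2*q+1) * Z)" unfolding b by (simp add: algebra_simps)
    finally show ?thesis .
  qed
  then have "(q+1) * X = 2*(2*q+1) * Z" by (simp only: mult_left_cancel[of "q+1"] add_is_0 one_neq_zero simp_thms)
  then show ?thesis unfolding X_def Z_def .
qed

lemma c_rec: "real (Suc k) * c p (Suc k) = (real k + real p + 1/2) * c p k"
proof -
  define q where "q = k + p"
  define X0 where "X0 = real ((2*q) choose q)"
  define X1 where "X1 = real ((2*q+2) choose (q+1))"
  define Y0 where "Y0 = real (q choose k)"
  define Y1 where "Y1 = real ((q+1) choose Suc k)"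
  have A: "real (q+1) * X1 = real (2*(2*q+1)) * X0"
    unfolding X0_def X1_def of_nat_mult[symmetric] by (rule arg_cong[OF central_rec])
  have B: "real (Suc k) * Y1 = real (q+1) * Y0"
    unfolding Y0_def Y1_def of_nat_mult[symmetric] by (simp only: Suc_eq_plus1[symmetric] Suc_times_binomial)
  have e1: "Suc k + p = q + 1" "2 * (q + 1) = 2*q+2" "2*(k+p) = 2*q" "k+p = q" by (auto simp: q_def)
  have c1: "c p (Suc k) = 1 / 2 ^ (2*Suc k) * X1 * Y1"
    unfolding c_def X1_def Y1_def by (simp only: e1)
  have c0: "c p k = 1 / 2 ^ (2*k) * X0 * Y0"
    unfolding c_def X0_def Y0_def by (simp only: e1)
  have "real (Suc k) * c p (Suc k) = 1 / 2 ^ (2*Suc k) * X1 * (real (Suc k) * Y1)"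
    unfolding c1 by (simp only: mult_ac)
  also have "\<dots> = 1 / 2 ^ (2*Suc k) * (real (q+1) * X1) * Y0"
    unfolding B by (simp only: mult_ac)
  also have "\<dots> = 1 / 2 ^ (2*Suc k) * (real (2*(2*q+1)) * X0) * Y0"
    unfolding A ..
  also have "\<dots> = (real k + real p + 1/2) * c p k"
    unfolding c0 by (simp add: q_def power_add field_simps)
  finally show ?thesis .
qed

definition e :: "nat \<Rightarrow> nat \<Rightarrow> real" where
  "e p l = (\<Sum>k<l. c p k / real (l - k))"

lemma e_rec: "real (Suc l) * e p (Suc l) = (real l + real p + 1/2) * e p l + c p l"
proof -
  have "real (Suc l) * e p (Suc l) = (\<Sum>k<Suc l. c p k + real k * c p k / real (Suc l - k))"
    unfolding e_def sum_distrib_left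
    by (intro sum.cong refl) (auto simp: field_simps of_nat_diff)
  also have "\<dots> = (\<Sum>k<Suc l. c p k) + (\<Sum>k<Suc l. real k * c p k / real (Suc l - k))"
    by (simp add: sum.distrib)
  also have "(\<Sum>k<Suc l. real k * c p k / real (Suc l - k)) = (\<Sum>k<l. real (Suc k) * c p (Suc k) / real (l - k))"
    by (subst sum.lessThan_Suc_shift) simp
  also have "\<dots> = (\<Sum>k<l. (real k + real p + 1/2) * c p k / real (l - k))"
    by (simp only: c_rec)
  also have "\<dots> = (\<Sum>k<l. (real l + real p + 1/2) * c p k / real (l - k)) - (\<Sum>k<l. c p k)"
    unfolding sum_subtractf[symmetric]
    by (intro sum.cong refl) (auto simp: field_simps of_nat_diff)
  finally show ?thesis
    by (simp add: e_def sum_distrib_left)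
qed

definition b :: "nat \<Rightarrow> nat \<Rightarrow> real" where
  "b p l = 2 * c p l * (oddharm (l+p) - oddharm p)"

lemma oddharm_Suc: "oddharm (Suc n) = oddharm n + 1 / (2 * real n + 1)"
  by (simp add: oddharm_def)

lemma b_rec: "real (Suc l) * b p (Suc l) = (real l + real p + 1/2) * b p l + c p l"
proof -
  have "real (Suc l) * b p (Suc l) = 2 * (real (Suc l) * c p (Suc l)) * (oddharm (l+p) - oddharm p + 1 / (2 * real (l+p) + 1))"
    unfolding b_def by (simp add: oddharm_Suc)
  also have "\<dots> = (real l + real p + 1/2) * b p l + c p l"
    unfolding c_rec b_def by (simp add: field_simps)
  finally show ?thesis .
qed

lemma e_eq_b: "e p l = b p l"
proof (induction l)
  case 0
  then show ?case by (simp add: e_def b_def)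
next
  case (Suc l)
  have "real (Suc l) * e p (Suc l) = real (Suc l) * b p (Suc l)"
    using e_rec b_rec Suc by simp
  then show ?case by simp
qed

lemma sum_from1: "(\<Sum>j=1..N. f j / real j) = (\<Sum>j\<le>N. f j / real j)"
  by (induction N) (auto simp: atMost_Suc)

lemma conv: "(\<Sum>k=0..n. c p k * (\<Sum>j=1..n-k. g (n-k-j) / real j)) = (\<Sum>l=0..n. g (n-l) * e p l)"
proof -
  have "(\<Sum>k=0..n. c p k * (\<Sum>j=1..n-k. g (n-k-j) / real j)) = (\<Sum>k\<le>n. \<Sum>j\<le>n-k. c p k * g (n-k-j) / real j)"
    by (simp only: sum_from1 atLeast0AtMost sum_distrib_left mult.assoc times_divide_eq_right)
  also have "\<dots> = (\<Sum>(k,j)\<in>{(i,j). i+j \<le> n}. c p k * g (n-k-j) / real j)"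
  proof -
    have "{(i,j). i+j \<le> n} = Sigma {..n} (\<lambda>k. {..n-k})" by auto
    then show ?thesis by (simp add: sum.Sigma)
  qed
  also have "\<dots> = (\<Sum>l\<le>n. \<Sum>k\<le>l. c p k * g (n-k-(l-k)) / real (l-k))"
    by (rule sum.triangle_reindex_eq)
  also have "\<dots> = (\<Sum>l\<le>n. g (n-l) * e p l)"
  proof (intro sum.cong refl)
    fix l assume "l \<in> {..n}"
    then have "(\<Sum>k\<le>l. c p k * g (n-k-(l-k)) / real (l-k)) = (\<Sum>k\<le>l. g (n-l) * (c p k / real (l-k)))"
      by (intro sum.cong refl) auto
    also have "\<dots> = g (n-l) * e p l"
      by (simp add: e_def lessThan_Suc_atMost[symmetric] sum_distrib_left)
    finally show "(\<Sum>k\<le>l. c p k * g (n-k-(l-k)) / real (l-k)) = g (n-l) * e p l" .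
  qed
  finally show ?thesis by (simp add: atLeast0AtMost)
qed


lemma c_shift: "real (p+1) * c (p+1) n = 4 * real (n+1) * c p (n+1)"
proof -
  define X where "X = real ((2*(n+p+1)) choose (n+p+1))"
  define Y1 where "Y1 = real ((n+p+1) choose n)"
  define Y2 where "Y2 = real ((n+p+1) choose (n+1))"
  have B: "real (n+1) * Y2 = real (p+1) * Y1"
    unfolding Y1_def Y2_def of_nat_mult[symmetric] using Suc_times_binomial_add[of n p] by simp
  have e1: "n + (p+1) = n+p+1" "(n+1) + p = n+p+1" by auto
  have c1: "c (p+1) n = 1 / 2^(2*n) * X * Y1"
    unfolding c_def X_def Y1_def by (simp only: e1)
  have c2: "c p (n+1) = 1 / 2^(2*(n+1)) * X * Y2"
    unfolding c_def X_def Y2_def by (simp only: e1)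
  have "real (p+1) * c (p+1) n = X * (real (p+1) * Y1) / 2^(2*n)"
    unfolding c1 by simp
  also have "\<dots> = X * (real (n+1) * Y2) / 2^(2*n)" by (simp only: B)
  also have "\<dots> = 4 * real (n+1) * c p (n+1)"
    unfolding c2 by (simp add: power_add field_simps)
  finally show ?thesis .
qed

lemma harmonic_G: "harmonic N = (\<Sum>j=1..N. 1 / real j)"
  by (simp add: harmonic_def)

lemma alg:
  fixes P N cc D O1 O0 :: real
  assumes "P \<ge> 0" "N \<ge> 0" "O1 = O0 + 1 / (2 * P + 1)"
  shows "4 * (N+1) / (2 * P + 1) * cc * D + 2 * cc * (D + O1 - O0)
       = 4 / (2 * P + 1) * ((N + 1 + P + 1/2) * cc) * (D + 1 / (2 * (N+P+1) + 1))"
proof -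
  define Q where "Q = 2 * P + 1"
  define R where "R = 2 * (N+P+1) + 1"
  have hQ: "Q \<noteq> 0" using assms by (simp add: Q_def)
  have hR: "R \<noteq> 0" using assms by (simp add: R_def)
  have RQ: "R = 2 * (N+1) + Q" by (simp add: R_def Q_def)
  have r: "N + 1 + P + 1/2 = R / 2" by (simp add: R_def)
  have l: "D + O1 - O0 = D + 1 / Q" using assms(3) by (simp add: Q_def)
  have "4 * (N+1) / Q * cc * D + 2 * cc * (D + 1 / Q) = 2 * cc / Q * (R * D + 1)"
    unfolding RQ using hQ by (simp add: field_simps)
  also have "\<dots> = 4 / Q * (R / 2 * cc) * (D + 1 / R)"
    using hR hQ by (simp add: field_simps)
  finally show ?thesis unfolding r l Q_def[symmetric] R_def[symmetric] .
qed
lemma cr_aux: fixes x y p n :: real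
  assumes "(n + 2) * y = (n + 1 + p + 1/2) * x" "p \<ge> 0"
  shows "4 / (2 * p + 1) * ((n + 1 + p + 1/2) * x) = 4 * (n + 2) / (2 * p + 1) * y"
proof -
  have "4 / (2 * p + 1) * ((n + 1 + p + 1/2) * x) = 4 / (2 * p + 1) * ((n + 2) * y)"
    using assms(1) by simp
  also have "\<dots> = 4 * (n + 2) / (2 * p + 1) * y" by simp
  finally show ?thesis .
qed

lemma sum_b: "(\<Sum>l=0..n. b p l) = 4 * real (n+1) / (2 * real p + 1) * c p (Suc n) * (oddharm (n+p+1) - oddharm (p+1))"
proof (induction n)
  case 0
  then show ?case by (simp add: b_def)
next
  case (Suc n)
  define D where "D = oddharm (n+p+1) - oddharm (p+1)"
  have o1: "D + 1 / (2 * (real n + real p + 1) + 1) = oddharm (Suc n + p + 1) - oddharm (p+1)"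
    using oddharm_Suc[of "n+p+1"] by (simp add: D_def)
  have o3: "oddharm (p+1) = oddharm p + 1 / (2 * real p + 1)"
    using oddharm_Suc[of p] by simp
  have cr: "4 / (2 * real p + 1) * ((real n + 1 + real p + 1/2) * c p (Suc n)) = 4 * (real n + 2) / (2 * real p + 1) * c p (Suc (Suc n))"
  proof (rule cr_aux)
    show "(real n + 2) * c p (Suc (Suc n)) = (real n + 1 + real p + 1/2) * c p (Suc n)"
      using c_rec[of "Suc n" p] by (simp add: algebra_simps)
  qed simp
  have "(\<Sum>l=0..Suc n. b p l) = 4 * (real n + 1) / (2 * real p + 1) * c p (Suc n) * D
        + 2 * c p (Suc n) * (D + oddharm (p+1) - oddharm p)"
    using Suc by (simp add: b_def D_def)
  also have "\<dots> = 4 / (2 * real p + 1) * ((real n + 1 + real p + 1/2) * c p (Suc n)) * (D + 1 / (2 * (real n + real p + 1) + 1))"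
    by (rule alg) (simp_all add: oddharm_Suc)
  also have "\<dots> = 4 * (real n + 2) / (2 * real p + 1) * c p (Suc (Suc n)) * (oddharm (Suc n + p + 1) - oddharm (p+1))"
    unfolding cr o1 ..
  finally show ?case by (simp add: add.commute)
qed

lemma shift_aux:
  fixes a b z X Y D :: real
  assumes "a * X = 4 * b * Y"
  shows "4 * b / z * Y * D = a / z * X * D"
proof -
  have "4 * b / z * Y * D = (4 * b * Y) * D / z" by simp
  also have "\<dots> = (a * X) * D / z" using assms by simp
  also have "\<dots> = a / z * X * D" by simp
  finally show ?thesis .
qed

theorem theorem13:
  fixes n p m :: nat
  shows "((\<Sum>k=0..n. 1 / 2 ^ (2*k) * real ((2*(k+p)) choose (k+p)) * real ((k+p) choose k)
            * mhn (n-k) m * (oddharm (k+p) - oddharm p))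
         = 1/2 * (\<Sum>k=0..n. 1 / 2 ^ (2*k) * real ((2*(k+p)) choose (k+p)) * real ((k+p) choose k)
            * mhn (n-k) (m+1))) \<and>
         ((\<Sum>k=0..n. 1 / 2 ^ (2*k) * real ((2*(k+p)) choose (k+p)) * real ((k+p) choose k)
            * harmonic (n-k))
         = 1 / 2 ^ (2*n) * (real (p+1) / real (2*p+1))
            * real ((2*(n+p+1)) choose (n+p+1)) * real ((n+p+1) choose n)
            * (oddharm (n+p+1) - oddharm (p+1)))"
proof
  have cdef: "\<And>k. 1 / 2 ^ (2*k) * real ((2*(k+p)) choose (k+p)) * real ((k+p) choose k) = c p k"
    by (simp add: c_def)
  have "(\<Sum>k=0..n. c p k * mhn (n-k) (m+1)) = (\<Sum>k=0..n. c p k * (\<Sum>j=1..n-k. G (n-k-j) m / real j))"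
    by (simp add: mhn_G G_Suc)
  also have "\<dots> = (\<Sum>l=0..n. G (n-l) m * e p l)" by (rule conv)
  also have "\<dots> = 2 * (\<Sum>l=0..n. c p l * mhn (n-l) m * (oddharm (l+p) - oddharm p))"
    unfolding e_eq_b b_def mhn_G sum_distrib_left by (intro sum.cong refl) (simp only: mult_ac)
  finally show "(\<Sum>k=0..n. 1 / 2 ^ (2*k) * real ((2*(k+p)) choose (k+p)) * real ((k+p) choose k)
            * mhn (n-k) m * (oddharm (k+p) - oddharm p))
         = 1/2 * (\<Sum>k=0..n. 1 / 2 ^ (2*k) * real ((2*(k+p)) choose (k+p)) * real ((k+p) choose k)
            * mhn (n-k) (m+1))"
    unfolding cdef by linarith
next
  have cdef: "\<And>k. 1 / 2 ^ (2*k) * real ((2*(k+p)) choose (k+p)) * real ((k+p) choose k) = c p k"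
    by (simp add: c_def)
  have cdef2: "1 / 2 ^ (2*n) * real ((2*(n+p+1)) choose (n+p+1)) * real ((n+p+1) choose n) = c (p+1) n"
    unfolding c_def by (simp only: add.assoc)
  have "(\<Sum>k=0..n. c p k * harmonic (n-k)) = (\<Sum>k=0..n. c p k * (\<Sum>j=1..n-k. (\<lambda>_. 1::real) (n-k-j) / real j))"
    by (simp add: harmonic_G)
  also have "\<dots> = (\<Sum>l=0..n. (\<lambda>_. 1::real) (n-l) * e p l)" by (rule conv)
  also have "\<dots> = (\<Sum>l=0..n. b p l)" by (simp add: e_eq_b)
  also have "\<dots> = 4 * real (n+1) / (2 * real p + 1) * c p (Suc n) * (oddharm (n+p+1) - oddharm (p+1))"
    by (rule sum_b)
  also have "\<dots> = 4 * real (n+1) / real (2*p+1) * c p (n+1) * (oddharm (n+p+1) - oddharm (p+1))"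
    by simp
  also have "\<dots> = (real (p+1) / real (2*p+1)) * c (p+1) n * (oddharm (n+p+1) - oddharm (p+1))"
    by (rule shift_aux[OF c_shift])
  also have "\<dots> = 1 / 2 ^ (2*n) * (real (p+1) / real (2*p+1))
            * real ((2*(n+p+1)) choose (n+p+1)) * real ((n+p+1) choose n)
            * (oddharm (n+p+1) - oddharm (p+1))"
    unfolding cdef2[symmetric] by (simp only: mult_ac)
  finally show "(\<Sum>k=0..n. 1 / 2 ^ (2*k) * real ((2*(k+p)) choose (k+p)) * real ((k+p) choose k)
            * harmonic (n-k))
         = 1 / 2 ^ (2*n) * (real (p+1) / real (2*p+1))
            * real ((2*(n+p+1)) choose (n+p+1)) * real ((n+p+1) choose n)
            * (oddharm (n+p+1) - oddharm (p+1))"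
    unfolding cdef .
qed

end
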